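(* Fix $z$ in a sufficiently small neighborhood of $\tfrac12$. Then $$\widehat\psi(\zeta,1-z)=-\widehat\varphi(\zeta,z).$$
   Context: For a parameter $t$ near $\frac12$: $Q(w)=w(w-1)(w-t)$, $w_\pm(t)=\frac13(t+1)\pm\frac13(t^2-t+1)^{1/2}$ (principal root), $Q_\pm(t)=Q(w_\pm(t))$. With $u(t)=\frac{3t-(t+1)^2}{3}$, $v(Q,t)=\frac1{27}\big(-2(t+1)^3+9t(t+1)-27Q\big)$, principal branches, $w_k(Q,t)=\frac{t+1}{3}+2\left(-\frac u3\right)^{1/2}\cos\!\Big(\frac13\arccos\Big(\frac{3v}{2u}\big(-\frac3u\big)^{1/2}\Big)+\theta_k\Big)$, $\theta_0=\frac{2\pi}3,\theta_1=0,\theta_2=-\frac{2\pi}3$. $\Psi(Q,t)=Q\frac{2w_1-w_0-w_2}{(w_0-w_1)(w_0-w_2)(w_1-w_2)}$, $\Phi(Q,t)=Q\frac{w_1+w_2-2w_0}{(w_0-w_1)(w_0-w_2)(w_1-w_2)}$ with $w_k=w_k(Q,t)$; $\widehat\psi(\zeta,t)=\Psi(Q_-(t)e^{-\zeta},t)$, $\widehat\varphi(\zeta,t)=\Phi(Q_+(t)e^{-\zeta},t)$. *)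

theory Defs
  imports "HOL-Analysis.Analysis"
begin

definition Qpoly :: "complex \<Rightarrow> complex \<Rightarrow> complex" where
  "Qpoly t w = w * (w - 1) * (w - t)"

definition w_plus :: "complex \<Rightarrow> complex" where
  "w_plus t = (t + 1) / 3 + csqrt (t\<^sup>2 - t + 1) / 3"

definition w_minus :: "complex \<Rightarrow> complex" where
  "w_minus t = (t + 1) / 3 - csqrt (t\<^sup>2 - t + 1) / 3"

definition Q_plus :: "complex \<Rightarrow> complex" where
  "Q_plus t = Qpoly t (w_plus t)"

definition Q_minus :: "complex \<Rightarrow> complex" where
  "Q_minus t = Qpoly t (w_minus t)"

definition u_coef :: "complex \<Rightarrow> complex" where
  "u_coef t = (3 * t - (t + 1)\<^sup>2) / 3"

definition v_coef :: "complex \<Rightarrow> complex \<Rightarrow> complex" where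
  "v_coef Q t = (-2 * (t + 1)^3 + 9 * t * (t + 1) - 27 * Q) / 27"

definition theta :: "nat \<Rightarrow> complex" where
  "theta k = (if k = 0 then 2 * of_real pi / 3 else if k = 1 then 0 else - 2 * of_real pi / 3)"

definition wroot :: "nat \<Rightarrow> complex \<Rightarrow> complex \<Rightarrow> complex" where
  "wroot k Q t = (t + 1) / 3 + 2 * csqrt (- u_coef t / 3) *
     cos (Arccos (3 * v_coef Q t / (2 * u_coef t) * csqrt (- 3 / u_coef t)) / 3 + theta k)"

definition Psi :: "complex \<Rightarrow> complex \<Rightarrow> complex" where
  "Psi Q t = (let w0 = wroot 0 Q t; w1 = wroot 1 Q t; w2 = wroot 2 Q t in
     Q * (2 * w1 - w0 - w2) / ((w0 - w1) * (w0 - w2) * (w1 - w2)))"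

definition Phi :: "complex \<Rightarrow> complex \<Rightarrow> complex" where
  "Phi Q t = (let w0 = wroot 0 Q t; w1 = wroot 1 Q t; w2 = wroot 2 Q t in
     Q * (w1 + w2 - 2 * w0) / ((w0 - w1) * (w0 - w2) * (w1 - w2)))"

definition psi_hat :: "complex \<Rightarrow> complex \<Rightarrow> complex" where
  "psi_hat \<zeta> t = Psi (Q_minus t * exp (- \<zeta>)) t"

definition phi_hat :: "complex \<Rightarrow> complex \<Rightarrow> complex" where
  "phi_hat \<zeta> t = Phi (Q_plus t * exp (- \<zeta>)) t"

end

theory Submission
  imports Defs
begin

lemma Im_Arccos_body_nonneg: "0 \<le> Im (w + \<i> * csqrt (1 - w\<^sup>2))"
proof -
  define s where "s = csqrt (1 - w\<^sup>2)"
  have sq: "s^2 = 1 - w^2" unfolding s_def by simp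
  have p0: "0 \<le> Re s" unfolding s_def by (rule Re_csqrt)
  have e1: "Re s ^2 - Im s ^2 = 1 - Re w ^2 + Im w ^2"
    using arg_cong[OF sq, of Re] by (simp add: power2_eq_square algebra_simps)
  have e2: "Re s * Im s = - (Re w * Im w)"
    using arg_cong[OF sq, of Im] by (simp add: power2_eq_square algebra_simps)
  have "Re s + Im w \<ge> 0"
  proof (rule ccontr)
    assume "\<not> ?thesis"
    then have lt: "Re s < - Im w" by simp
    then have y: "Im w < 0" using p0 by simp
    have "Re s ^2 < Im w ^2" using lt p0
      by (smt (verit) power_strict_mono power2_minus zero_less_numeral)
    have "(Re w * Im w)^2 = Re s^2 * Im s^2" using e2 by (metis power_mult_distrib power2_minus)
    also have "\<dots> \<le> Im w ^2 * Im s^2" using \<open>Re s ^2 < Im w ^2\<close>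
      by (intro mult_right_mono) auto
    finally have "Re w ^2 * Im w^2 \<le> Im s^2 * Im w^2" by (simp add: power_mult_distrib mult.commute)
    then have "Re w ^2 \<le> Im s^2" using y by simp
    then show False using e1 \<open>Re s ^2 < Im w ^2\<close> by linarith
  qed
  then show ?thesis unfolding s_def by simp
qed

lemma Arccos_minus: "Arccos (- w) = pi - Arccos w"
proof -
  define s where "s = csqrt (1 - w\<^sup>2)"
  define a where "a = w + \<i> * s"
  define b where "b = - w + \<i> * s"
  have a0: "a \<noteq> 0" unfolding a_def s_def by (rule Arccos_body_lemma)
  have b0: "b \<noteq> 0" unfolding b_def s_def using Arccos_body_lemma[of "-w"] by simp
  have ia: "0 \<le> Im a" unfolding a_def s_def by (rule Im_Arccos_body_nonneg)
  have ib: "0 \<le> Im b" unfolding b_def s_def using Im_Arccos_body_nonneg[of "-w"] by simp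
  have ab: "a * b = -1"
  proof -
    have "s^2 = 1 - w^2" unfolding s_def by simp
    then show ?thesis unfolding a_def b_def by (simp add: algebra_simps power2_eq_square)
  qed
  have "exp (Ln a + Ln b) = -1" using a0 b0 ab by (simp add: exp_add)
  moreover have "exp (\<i> * pi) = -1" by (simp add: exp_Euler)
  ultimately have "exp (Ln a + Ln b) = exp (\<i> * pi)" by simp
  then obtain n :: int where n: "Ln a + Ln b = \<i> * pi + (of_int (2 * n) * pi) * \<i>"
    unfolding exp_eq by blast
  have "0 \<le> Im (Ln a)" "Im (Ln a) \<le> pi" "0 \<le> Im (Ln b)" "Im (Ln b) \<le> pi"
    using ia ib a0 b0 Im_Ln_le_pi Im_Ln_pos_le by auto
  moreover have "Im (Ln a) + Im (Ln b) = pi + 2 * pi * n" using arg_cong[OF n, of Im] by simp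
  ultimately have "\<bar>2 * pi * n\<bar> \<le> pi" by linarith
  then have "\<bar>real_of_int n\<bar> * (2*pi) \<le> 1 * pi" by (simp add: abs_mult)
  then have "\<bar>real_of_int n\<bar> * 2 \<le> 1" using pi_gt_zero
    by (metis mult.assoc mult_le_cancel_right_pos mult.commute)
  then have "n = 0" by linarith
  then have "Ln b = \<i> * pi - Ln a" using n by (simp add: algebra_simps)
  moreover have "Arccos (-w) = - \<i> * Ln b" unfolding Arccos_def b_def s_def by simp
  moreover have "Arccos w = - \<i> * Ln a" unfolding Arccos_def a_def s_def by simp
  ultimately have "Arccos (-w) = - \<i> * (\<i> * pi - Ln a)" "Arccos w = - \<i> * Ln a" by simp_all
  then show ?thesis by (simp add: algebra_simps)
qed
lemma wminus_sym: "w_minus (1 - z) = 1 - w_plus z"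
proof -
  have "(1 - z)\<^sup>2 - (1 - z) + 1 = z\<^sup>2 - z + 1" by (simp add: power2_eq_square algebra_simps)
  then show ?thesis unfolding w_minus_def w_plus_def by (simp only:) (simp add: field_simps)
qed

lemma Qminus_sym: "Q_minus (1 - z) = - Q_plus z"
  unfolding Q_minus_def Q_plus_def wminus_sym Qpoly_def by (simp add: algebra_simps)

lemma u_sym: "u_coef (1 - z) = u_coef z"
  unfolding u_coef_def by (simp add: power2_eq_square algebra_simps)

lemma v_sym: "v_coef (- q) (1 - z) = - v_coef q z"
  unfolding v_coef_def by (simp add: divide_simps) (simp add: power3_eq_cube algebra_simps)


lemma wroot_sym:
  "wroot 0 (- q) (1 - z) = 1 - wroot 1 q z"
  "wroot 1 (- q) (1 - z) = 1 - wroot 0 q z"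
  "wroot 2 (- q) (1 - z) = 1 - wroot 2 q z"
proof -
  define A where "A = 3 * v_coef q z / (2 * u_coef z) * csqrt (- 3 / u_coef z)"
  define S where "S = csqrt (- u_coef z / 3)"
  define al where "al = Arccos A"
  have arg: "3 * v_coef (- q) (1 - z) / (2 * u_coef (1 - z)) * csqrt (- 3 / u_coef (1 - z)) = - A"
    unfolding A_def u_sym v_sym by simp
  have ar: "Arccos (- A) = pi - al" unfolding al_def by (rule Arccos_minus)
  have gen: "wroot k (- q) (1 - z) = (2 - z) / 3 + 2 * S * cos ((pi - al) / 3 + theta k)" for k
    unfolding wroot_def arg unfolding ar unfolding S_def u_sym by (simp add: field_simps)
  have gen2: "wroot k q z = (z + 1) / 3 + 2 * S * cos (al / 3 + theta k)" for k
    unfolding wroot_def A_def[symmetric] al_def[symmetric] S_def by (simp add: field_simps)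
  have c0: "cos ((pi - al) / 3 + theta 0) = - cos (al / 3 + theta 1)"
  proof -
    have "(pi - al) / 3 + theta 0 = pi - (al / 3 + theta 1)" by (simp add: theta_def field_simps)
    then show ?thesis by (simp add: cos_diff)
  qed
  have c1: "cos ((pi - al) / 3 + theta 1) = - cos (al / 3 + theta 0)"
  proof -
    have "(pi - al) / 3 + theta 1 = pi - (al / 3 + theta 0)" by (simp add: theta_def field_simps)
    then show ?thesis by (simp add: cos_diff)
  qed
  have c2: "cos ((pi - al) / 3 + theta 2) = - cos (al / 3 + theta 2)"
  proof -
    have "(pi - al) / 3 + theta 2 = - ((al / 3 + theta 2) + pi)" by (simp add: theta_def field_simps)
    then show ?thesis by (simp only: cos_minus cos_plus_pi)
  qed
  show "wroot 0 (- q) (1 - z) = 1 - wroot 1 q z"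
    unfolding gen gen2 c0 by (simp add: field_simps)
  show "wroot 1 (- q) (1 - z) = 1 - wroot 0 q z"
    unfolding gen gen2 c1 by (simp add: field_simps)
  show "wroot 2 (- q) (1 - z) = 1 - wroot 2 q z"
    unfolding gen gen2 c2 by (simp add: field_simps)
qed

lemma Psi_Phi_sym: "Psi (- q) (1 - z) = - Phi q z"
proof -
  have "(1 - wroot 1 q z - (1 - wroot 0 q z)) * (1 - wroot 1 q z - (1 - wroot 2 q z)) *
        (1 - wroot 0 q z - (1 - wroot 2 q z))
      = (wroot 0 q z - wroot 1 q z) * (wroot 0 q z - wroot 2 q z) * (wroot 1 q z - wroot 2 q z)"
    by (simp add: algebra_simps)
  then show ?thesis unfolding Psi_def Phi_def Let_def wroot_sym
    by (simp add: algebra_simps minus_divide_left)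
qed

theorem proposition3p8:
  shows "\<exists>\<epsilon>>0. \<forall>z::complex. cmod (z - 1/2) < \<epsilon> \<longrightarrow>
           (\<forall>\<zeta>::complex. psi_hat \<zeta> (1 - z) = - phi_hat \<zeta> z)"
proof (intro exI[of _ 1] conjI allI impI)
  fix z \<zeta> :: complex
  show "psi_hat \<zeta> (1 - z) = - phi_hat \<zeta> z"
    unfolding psi_hat_def phi_hat_def Qminus_sym
    using Psi_Phi_sym[of "Q_plus z * exp (- \<zeta>)" z] by simp
qed simp
end
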